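(* Let $A:[0,1]\to\mathbb{R}^{n\times n}$ have entries in $H^1[0,1]$, with weak derivative $A'(s)$, and satisfy: (1) $A(0)=I$, $A(1)=0$; (2) $A(s)$ is positive semi-definite for all $s\in[0,1]$; (3) $\|A(s)\mathbf{x}\|\le\|A(s')\mathbf{x}\|$ for all $\mathbf{x}\in\mathbb{R}^n$ whenever $s\ge s'$; (4) $A$ is continuous on $[0,1]$. For $\mathbf{x}_0,\boldsymbol{\epsilon}\in\mathbb{R}^n$ let $\mathbf{x}_s=A(s)\mathbf{x}_0+(I-A(s))\boldsymbol{\epsilon}$. Then the vector fields $A'(s)A(s)^{\dagger}[\mathbf{x}_s-\boldsymbol{\epsilon}]$ and $A'(s)[\mathbf{x}_0-\boldsymbol{\epsilon}]$ are equal (as functions of $s$, for almost every $s\in[0,1]$), for all $\mathbf{x}_0,\boldsymbol{\epsilon}\in\mathbb{R}^n$; equivalently $A'(s)A(s)^\dagger A(s)=A'(s)$ almost everywhere.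
   Context: $H^1[0,1]$ is the Sobolev space of $L^2$ functions on $[0,1]$ with $L^2$ weak derivative; $A'(s)$ is the entrywise weak derivative (defined almost everywhere). $A(s)^\dagger$ denotes the Moore–Penrose pseudo-inverse of $A(s)$. *)

theory Defs
  imports "HOL-Analysis.Analysis"
begin

definition smooth_fun :: "(real \<Rightarrow> real) \<Rightarrow> bool" where
  "smooth_fun \<phi> \<longleftrightarrow> (\<exists>D :: nat \<Rightarrow> real \<Rightarrow> real. D 0 = \<phi> \<and>
      (\<forall>k x. (D k has_real_derivative D (Suc k) x) (at x)))"

definition test_fun :: "real \<Rightarrow> real \<Rightarrow> (real \<Rightarrow> real) \<Rightarrow> bool" where
  "test_fun a b \<phi> \<longleftrightarrow> smooth_fun \<phi> \<and>
      (\<exists>c d. a < c \<and> d < b \<and> (\<forall>x. x \<notin> {c..d} \<longrightarrow> \<phi> x = 0))"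

definition L2_on :: "real set \<Rightarrow> (real \<Rightarrow> real) \<Rightarrow> bool" where
  "L2_on S f \<longleftrightarrow> f \<in> borel_measurable (lebesgue_on S) \<and>
      integrable (lebesgue_on S) (\<lambda>x. (f x)\<^sup>2)"

definition weak_deriv_on :: "real \<Rightarrow> real \<Rightarrow> (real \<Rightarrow> real) \<Rightarrow> (real \<Rightarrow> real) \<Rightarrow> bool" where
  "weak_deriv_on a b f g \<longleftrightarrow>
      integrable (lebesgue_on {a..b}) f \<and> integrable (lebesgue_on {a..b}) g \<and>
      (\<forall>\<phi>. test_fun a b \<phi> \<longrightarrow>
         (LINT x|lebesgue_on {a..b}. f x * deriv \<phi> x) = - (LINT x|lebesgue_on {a..b}. g x * \<phi> x))"

definition H1_with_deriv :: "(real \<Rightarrow> real) \<Rightarrow> (real \<Rightarrow> real) \<Rightarrow> bool" where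
  "H1_with_deriv f g \<longleftrightarrow> L2_on {0..1} f \<and> L2_on {0..1} g \<and> weak_deriv_on 0 1 f g"

definition pinv :: "real^'n^'n \<Rightarrow> real^'n^'n" where
  "pinv A = (THE X. A ** X ** A = A \<and> X ** A ** X = X \<and>
                    transpose (A ** X) = A ** X \<and> transpose (X ** A) = X ** A)"

definition psd :: "real^'n^'n \<Rightarrow> bool" where
  "psd A \<longleftrightarrow> transpose A = A \<and> (\<forall>x. 0 \<le> x \<bullet> (A *v x))"

end

theory Submission
  imports Defs "HOL-Computational_Algebra.Polynomial"
begin


lemma smooth_funI_class:
  assumes "P f" and step: "\<And>u. P u \<Longrightarrow> \<exists>u'. P u' \<and> (\<forall>x. (u has_real_derivative u' x) (at x))"
  shows "smooth_fun f"
proof -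
  define nxt where "nxt u = (SOME u'. P u' \<and> (\<forall>x. (u has_real_derivative u' x) (at x)))" for u
  have nxt: "P (nxt u) \<and> (\<forall>x. (u has_real_derivative nxt u x) (at x))" if "P u" for u
    unfolding nxt_def by (rule someI_ex[OF step[OF that]])
  define D where "D k = (nxt ^^ k) f" for k
  have P: "P (D k)" for k
    by (induction k) (auto simp: D_def assms(1) nxt)
  have "(D k has_real_derivative D (Suc k) x) (at x)" for k x
    using nxt[OF P[of k]] by (simp add: D_def)
  then show ?thesis unfolding smooth_fun_def
    by (intro exI[of _ D]) (simp add: D_def)
qed

definition hf :: "real \<Rightarrow> real" where
  "hf x = (if 0 < x then exp (- 1 / x) else 0)"

lemma poly_div_exp_0: "((\<lambda>t. poly q t / exp t) \<longlongrightarrow> (0::real)) at_top"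
proof -
  have eq: "(\<lambda>t. poly q t / exp t) = (\<lambda>t. \<Sum>i\<le>degree q. coeff q i * (t ^ i / exp t))"
    by (auto simp: poly_altdef sum_divide_distrib)
  show ?thesis unfolding eq
    by (intro tendsto_null_sum tendsto_mult_right_zero tendsto_power_div_exp_0)
qed

lemma hf_class_deriv:
  fixes p :: "real poly"
  defines "u \<equiv> (\<lambda>x. if 0 < x then poly p (1 / x) * exp (- 1 / x) else 0)"
  defines "q \<equiv> [:0, 0, 1:] * (p - pderiv p)"
  shows "(u has_real_derivative (if 0 < x then poly q (1 / x) * exp (- 1 / x) else 0)) (at x)"
proof (cases "0 < x")
  case True
  have i1: "((\<lambda>x. 1 / x) has_real_derivative - (1 / x^2)) (at x)"
    using True by (auto intro!: derivative_eq_intros simp: power2_eq_square)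
  have i2: "((\<lambda>x. - 1 / x) has_real_derivative 1 / x^2) (at x)"
    using True by (auto intro!: derivative_eq_intros simp: power2_eq_square)
  have d1: "((\<lambda>x. poly p (1 / x)) has_real_derivative poly (pderiv p) (1 / x) * - (1 / x^2)) (at x)"
    by (rule DERIV_chain2[OF poly_DERIV i1])
  have d2': "((\<lambda>x. exp (- 1 / x)) has_real_derivative exp (- 1 / x) * (1 / x^2)) (at x)"
    by (rule DERIV_chain2[OF DERIV_exp i2])
  have d: "((\<lambda>x. poly p (1 / x) * exp (- 1 / x)) has_real_derivative
      poly (pderiv p) (1 / x) * - (1 / x^2) * exp (- 1 / x) + exp (- 1 / x) * (1 / x^2) * poly p (1 / x)) (at x)"
    by (rule DERIV_mult[OF d1 d2'])
  have "poly (pderiv p) (1 / x) * - (1 / x^2) * exp (- 1 / x) + exp (- 1 / x) * (1 / x^2) * poly p (1 / x)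
      = poly q (1 / x) * exp (- 1 / x)"
    by (simp add: q_def algebra_simps power2_eq_square)
  with d have d2: "((\<lambda>x. poly p (1 / x) * exp (- 1 / x)) has_real_derivative poly q (1 / x) * exp (- 1 / x)) (at x)"
    by simp
  have "(u has_real_derivative poly q (1 / x) * exp (- 1 / x)) (at x)"
    by (rule has_field_derivative_transform_within_open[OF d2 open_greaterThan[of 0]])
       (auto simp: u_def True)
  then show ?thesis using True by simp
next
  case False
  show ?thesis
  proof (cases "x < 0")
    case True
    have "(u has_real_derivative 0) (at x)"
      by (rule has_field_derivative_transform_within_open[OF DERIV_const open_lessThan[of 0]])
         (auto simp: u_def True)
    then show ?thesis using True by simp
  next
    case False
    with \<open>\<not> 0 < x\<close> have x0: "x = 0" by simp
    have "((\<lambda>y. (u y - u 0) / (y - 0)) \<longlongrightarrow> 0) (at 0)"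
      unfolding filterlim_at_split
    proof
      show "((\<lambda>y. (u y - u 0) / (y - 0)) \<longlongrightarrow> 0) (at_left 0)"
      proof (rule Lim_transform_eventually[OF tendsto_const])
        show "\<forall>\<^sub>F y in at_left 0. 0 = (u y - u 0) / (y - 0)"
          unfolding eventually_at_left_field by (rule exI[of _ "-1"]) (simp add: u_def)
      qed
    next
      have lim: "((\<lambda>t. poly (pCons 0 p) t / exp t) \<longlongrightarrow> (0::real)) at_top"
        by (rule poly_div_exp_0)
      have "((\<lambda>t. (u (inverse t) - u 0) / (inverse t - 0)) \<longlongrightarrow> 0) at_top"
      proof (rule Lim_transform_eventually[OF lim])
        show "\<forall>\<^sub>F t in at_top. poly (pCons 0 p) t / exp t = (u (inverse t) - u 0) / (inverse t - 0)"
          using eventually_gt_at_top[of 0]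
        proof eventually_elim
          case (elim t)
          have "u (inverse t) = poly p t / exp t" using elim
            by (simp add: u_def exp_minus divide_inverse)
          moreover have "u 0 = 0" by (simp add: u_def)
          ultimately show ?case using elim by (simp add: divide_inverse)
        qed
      qed
      then show "((\<lambda>y. (u y - u 0) / (y - 0)) \<longlongrightarrow> 0) (at_right 0)"
        unfolding filterlim_at_right_to_top by simp
    qed
    then have "(u has_real_derivative 0) (at 0)"
      unfolding has_field_derivative_iff .
    then show ?thesis using x0 by simp
  qed
qed

lemma smooth_hf: "smooth_fun hf"
proof (rule smooth_funI_class[where P="\<lambda>u. \<exists>p. u = (\<lambda>x. if 0 < x then poly p (1 / x) * exp (- 1 / x) else 0)"])
  show "\<exists>p. hf = (\<lambda>x. if 0 < x then poly p (1 / x) * exp (- 1 / x) else 0)"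
    by (intro exI[of _ 1]) (auto simp: hf_def fun_eq_iff)
next
  fix u :: "real \<Rightarrow> real" assume "\<exists>p. u = (\<lambda>x. if 0 < x then poly p (1 / x) * exp (- 1 / x) else 0)"
  then obtain p where u: "u = (\<lambda>x. if 0 < x then poly p (1 / x) * exp (- 1 / x) else 0)" by blast
  show "\<exists>u'. (\<exists>p. u' = (\<lambda>x. if 0 < x then poly p (1 / x) * exp (- 1 / x) else 0)) \<and>
         (\<forall>x. (u has_real_derivative u' x) (at x))"
    unfolding u
    by (rule exI[of _ "\<lambda>x. if 0 < x then poly ([:0, 0, 1:] * (p - pderiv p)) (1 / x) * exp (- 1 / x) else 0"])
       (intro conjI allI hf_class_deriv exI[of _ "[:0,0,1:] * (p - pderiv p)"] refl)
qed

inductive prodcl :: "(nat \<Rightarrow> real \<Rightarrow> real) \<Rightarrow> (nat \<Rightarrow> real \<Rightarrow> real) \<Rightarrow> (real \<Rightarrow> real) \<Rightarrow> bool"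
  for D E where
  base: "prodcl D E (\<lambda>x. D i x * E j x)"
| add: "prodcl D E u \<Longrightarrow> prodcl D E v \<Longrightarrow> prodcl D E (\<lambda>x. u x + v x)"

lemma smooth_mult:
  assumes "smooth_fun f" "smooth_fun g"
  shows "smooth_fun (\<lambda>x. f x * g x)"
proof -
  obtain D where D: "D 0 = f" "\<And>k x. (D k has_real_derivative D (Suc k) x) (at x)"
    using assms(1) unfolding smooth_fun_def by blast
  obtain E where E: "E 0 = g" "\<And>k x. (E k has_real_derivative E (Suc k) x) (at x)"
    using assms(2) unfolding smooth_fun_def by blast
  show ?thesis
  proof (rule smooth_funI_class[where P="prodcl D E"])
    show "prodcl D E (\<lambda>x. f x * g x)" using prodcl.base[of D E 0 0] by (simp add: D E)
  next
    fix u assume "prodcl D E u"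
    then show "\<exists>u'. prodcl D E u' \<and> (\<forall>x. (u has_real_derivative u' x) (at x))"
    proof induction
      case (base i j)
      have "((\<lambda>x. D i x * E j x) has_real_derivative D (Suc i) x * E j x + D i x * E (Suc j) x) (at x)" for x
        using DERIV_mult[OF D(2)[of i x] E(2)[of j x]] by (simp add: algebra_simps)
      moreover have "prodcl D E (\<lambda>x. D (Suc i) x * E j x + D i x * E (Suc j) x)"
        by (intro prodcl.add prodcl.base)
      ultimately show ?case by blast
    next
      case (add u v)
      then obtain u' v' where "prodcl D E u'" "\<forall>x. (u has_real_derivative u' x) (at x)"
        "prodcl D E v'" "\<forall>x. (v has_real_derivative v' x) (at x)" by blast
      then show ?case
        by (intro exI[of _ "\<lambda>x. u' x + v' x"] conjI allI prodcl.add DERIV_add) auto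
    qed
  qed
qed

lemma smooth_affine:
  assumes "smooth_fun f"
  shows "smooth_fun (\<lambda>x. f (c * x + d))"
proof -
  obtain D where D: "D 0 = f" "\<And>k x. (D k has_real_derivative D (Suc k) x) (at x)"
    using assms(1) unfolding smooth_fun_def by blast
  have "((\<lambda>x. c ^ k * D k (c * x + d)) has_real_derivative c ^ Suc k * D (Suc k) (c * x + d)) (at x)" for k x
  proof -
    have l: "((\<lambda>x. c * x + d) has_real_derivative c) (at x)"
      by (auto intro!: derivative_eq_intros)
    have "((\<lambda>x. D k (c * x + d)) has_real_derivative D (Suc k) (c * x + d) * c) (at x)"
      by (rule DERIV_chain2[OF D(2) l])
    from DERIV_cmult[OF this, of "c ^ k"] show ?thesis by (simp add: algebra_simps)
  qed
  then show ?thesis unfolding smooth_fun_def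
    by (intro exI[of _ "\<lambda>k x. c ^ k * D k (c * x + d)"]) (simp add: D(1))
qed

definition phi :: "real \<Rightarrow> real \<Rightarrow> real \<Rightarrow> real \<Rightarrow> real" where
  "phi k p b x = hf (k * (x - p) - 1) * hf (k * (b - x) - 1)"

lemma smooth_phi: "smooth_fun (phi k p b)"
proof -
  have "smooth_fun (\<lambda>x. hf (k * x + (- k * p - 1)) * hf ((- k) * x + (k * b - 1)))"
    by (intro smooth_mult smooth_affine smooth_hf)
  moreover have "(\<lambda>x. hf (k * x + (- k * p - 1)) * hf ((- k) * x + (k * b - 1))) = phi k p b"
    by (auto simp: phi_def fun_eq_iff algebra_simps)
  ultimately show ?thesis by simp
qed

lemma hf_nonneg: "0 \<le> hf x" by (simp add: hf_def)

lemma hf_le1: "hf x \<le> 1" by (simp add: hf_def)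

lemma hf_lim: "(hf \<longlongrightarrow> 1) at_top"
proof -
  have "((\<lambda>x. inverse x) \<longlongrightarrow> (0::real)) at_top"
    by (rule tendsto_inverse_0_at_top[OF filterlim_ident])
  from tendsto_exp[OF tendsto_minus[OF this]]
  have "((\<lambda>x::real. exp (- inverse x)) \<longlongrightarrow> exp (- 0::real)) at_top" .
  then have l: "((\<lambda>x::real. exp (- inverse x)) \<longlongrightarrow> (1::real)) at_top" by simp
  show ?thesis
  proof (rule Lim_transform_eventually[OF l])
    show "\<forall>\<^sub>F x in at_top. exp (- inverse x) = hf x"
      using eventually_gt_at_top[of 0] by eventually_elim (simp add: hf_def divide_inverse)
  qed
qed

lemma smooth_continuous: "smooth_fun f \<Longrightarrow> continuous_on UNIV f"
  unfolding smooth_fun_def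
  by (metis DERIV_isCont continuous_at_imp_continuous_on)

lemma smooth_deriv_zero:
  assumes "smooth_fun f" "open U" "x \<in> U" "\<And>y. y \<in> U \<Longrightarrow> f y = 0"
  shows "deriv f x = 0"
proof -
  have "(f has_real_derivative 0) (at x)"
    by (rule has_field_derivative_transform_within_open[OF DERIV_const assms(2,3)]) (simp add: assms(4))
  then show ?thesis by (rule DERIV_imp_deriv)
qed



lemma phi_zero_left: "0 < k \<Longrightarrow> x < p + 1 / k \<Longrightarrow> phi k p b x = 0"
proof -
  assume k: "0 < k" and x: "x < p + 1 / k"
  have "k * (x - p) < k * (1 / k)" using k x by (intro mult_strict_left_mono) auto
  then have "k * (x - p) - 1 < 0" using k by simp
  then show ?thesis by (simp add: phi_def hf_def)
qed

lemma phi_zero_right: "0 < k \<Longrightarrow> b - 1 / k < x \<Longrightarrow> phi k p b x = 0"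
proof -
  assume k: "0 < k" and x: "b - 1 / k < x"
  have "k * (b - x) < k * (1 / k)" using k x by (intro mult_strict_left_mono) auto
  then have "k * (b - x) - 1 < 0" using k by simp
  then show ?thesis by (simp add: phi_def hf_def)
qed

lemma phi_bounds: "0 \<le> phi k p b x" "phi k p b x \<le> 1"
  unfolding phi_def using hf_nonneg hf_le1
  by (auto intro: mult_nonneg_nonneg mult_le_one)

lemma lin_at_top: "0 < c \<Longrightarrow> filterlim (\<lambda>n::nat. real (Suc n) * c - 1) at_top sequentially"
proof -
  assume c: "0 < c"
  show ?thesis
    unfolding filterlim_at_top eventually_sequentially
  proof
    fix Z :: real
    obtain N :: nat where N: "(Z + 1) / c < real N" using reals_Archimedean2 by blast
    have "Z \<le> real (Suc n) * c - 1" if "N \<le> n" for n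
    proof -
      have "(Z + 1) / c < real (Suc n)" using N that by simp
      then have "Z + 1 < real (Suc n) * c" using c by (simp add: pos_divide_less_eq)
      then show ?thesis by simp
    qed
    then show "\<exists>N. \<forall>n\<ge>N. Z \<le> real (Suc n) * c - 1" by blast
  qed
qed

lemma phi_lim: "(\<lambda>n. phi (real (Suc n)) p b x) \<longlonglongrightarrow> indicator {p<..<b} x"
proof (cases "p < x \<and> x < b")
  case True
  have l1: "(\<lambda>n. hf (real (Suc n) * (x - p) - 1)) \<longlonglongrightarrow> 1"
    by (rule filterlim_compose[OF hf_lim lin_at_top]) (use True in simp)
  have l2: "(\<lambda>n. hf (real (Suc n) * (b - x) - 1)) \<longlonglongrightarrow> 1"
    by (rule filterlim_compose[OF hf_lim lin_at_top]) (use True in simp)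
  show ?thesis using tendsto_mult[OF l1 l2] True by (simp add: phi_def)
next
  case False
  have "phi (real (Suc n)) p b x = 0" for n
  proof (cases "x \<le> p")
    case True
    have "real (Suc n) * (x - p) \<le> 0" using True by (intro mult_nonneg_nonpos) auto
    then show ?thesis by (simp add: phi_def hf_def)
  next
    case False
    with \<open>\<not> (p < x \<and> x < b)\<close> have "b \<le> x" by auto
    have "real (Suc n) * (b - x) \<le> 0" using \<open>b \<le> x\<close> by (intro mult_nonneg_nonpos) auto
    then show ?thesis by (simp add: phi_def hf_def)
  qed
  then show ?thesis using False by simp
qed

lemma interval_integral_zero:
  fixes f g :: "real \<Rightarrow> real"
  assumes wd: "weak_deriv_on 0 1 f g" and a0: "0 \<le> a" and b1: "b \<le> 1"
    and fz: "\<And>x. a < x \<Longrightarrow> x < b \<Longrightarrow> f x = 0" and pa: "a \<le> p"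
  shows "(LINT x|lebesgue_on {0..1}. g x * indicator {p<..<b} x) = 0"
proof -
  let ?M = "lebesgue_on {0..1::real}"
  have ig: "integrable ?M g" using wd by (simp add: weak_deriv_on_def)
  have zero: "(LINT x|?M. g x * phi (real (Suc n)) p b x) = 0" for n
  proof -
    define k where "k = real (Suc n)"
    have k: "0 < k" by (simp add: k_def)
    have kk: "0 < 1 / k" using k by simp
    have tf: "test_fun 0 1 (phi k p b)"
      unfolding test_fun_def
    proof (intro conjI exI)
      show "smooth_fun (phi k p b)" by (rule smooth_phi)
      show "0 < p + 1 / k" using a0 pa k by (simp add: add_nonneg_pos)
      have "0 < 1 / k" using k by simp
      then show "b - 1 / k < 1" using b1 by linarith
      show "\<forall>x. x \<notin> {p + 1 / k..b - 1 / k} \<longrightarrow> phi k p b x = 0"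
        using phi_zero_left[OF k] phi_zero_right[OF k] by auto
    qed
    have "f x * deriv (phi k p b) x = 0" for x
    proof (cases "a < x \<and> x < b")
      case True then show ?thesis using fz by simp
    next
      case False
      then consider "x \<le> a" | "b \<le> x" by linarith
      then show ?thesis
      proof cases
        case 1
        have "x < p + 1 / k" using 1 pa kk by linarith
        then have "deriv (phi k p b) x = 0"
          by (intro smooth_deriv_zero[OF smooth_phi open_lessThan[of "p + 1 / k"]])
             (auto intro: phi_zero_left[OF k])
        then show ?thesis by simp
      next
        case 2
        have "b - 1 / k < x" using 2 kk by linarith
        then have "deriv (phi k p b) x = 0"
          by (intro smooth_deriv_zero[OF smooth_phi open_greaterThan[of "b - 1 / k"]])
             (auto intro: phi_zero_right[OF k])
        then show ?thesis by simp
      qed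
    qed
    then have "(\<lambda>x. f x * deriv (phi k p b) x) = (\<lambda>x. 0)" by (rule ext)
    then have "(LINT x|?M. f x * deriv (phi k p b) x) = 0" by simp
    with wd tf show ?thesis unfolding weak_deriv_on_def k_def by auto
  qed
  have gm: "g \<in> borel_measurable ?M" using ig by (rule borel_measurable_integrable)
  have phim: "phi k p b \<in> borel_measurable ?M" for k
    by (rule continuous_imp_measurable_on_sets_lebesgue[OF continuous_on_subset[OF smooth_continuous[OF smooth_phi]]]) auto
  have indm: "indicator {p<..<b} \<in> borel_measurable ?M"
  proof (rule measurable_restrict_space1, rule measurable_completion)
    show "indicator {p<..<b} \<in> borel_measurable lborel" by simp
  qed
  have "(\<lambda>n. LINT x|?M. g x * phi (real (Suc n)) p b x) \<longlonglongrightarrow> (LINT x|?M. g x * indicator {p<..<b} x)"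
  proof (rule integral_dominated_convergence[where w="\<lambda>x. norm (g x)"])
    show "(\<lambda>x. g x * indicator {p<..<b} x) \<in> borel_measurable ?M"
      using gm indm by measurable
    show "(\<lambda>x. g x * phi (real (Suc n)) p b x) \<in> borel_measurable ?M" for n
      using gm phim by measurable
    show "integrable ?M (\<lambda>x. norm (g x))" using ig by simp
    show "AE x in ?M. (\<lambda>n. g x * phi (real (Suc n)) p b x) \<longlonglongrightarrow> g x * indicator {p<..<b} x"
      by (intro AE_I2 tendsto_mult_left phi_lim)
    show "AE x in ?M. norm (g x * phi (real (Suc n)) p b x) \<le> norm (g x)" for n
      using phi_bounds[of "real (Suc n)" p b]
      by (intro AE_I2) (auto simp: abs_mult intro: mult_left_le)
  qed
  then show ?thesis using zero by (simp add: LIMSEQ_const_iff)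
qed

lemma weak_deriv_zero_interval:
  fixes f g :: "real \<Rightarrow> real"
  assumes wd: "weak_deriv_on 0 1 f g" and a0: "0 \<le> a" and b1: "b \<le> 1"
    and fz: "\<And>x. a < x \<Longrightarrow> x < b \<Longrightarrow> f x = 0"
  shows "AE x in lebesgue. a < x \<and> x < b \<longrightarrow> g x = 0"
proof -
  let ?M = "lebesgue_on {0..1::real}"
  define G where "G x = g x * indicator {a<..<b} x" for x
  have ig: "integrable ?M g" using wd by (simp add: weak_deriv_on_def)
  have ig2: "integrable lebesgue (\<lambda>x. indicator {0..1::real} x *\<^sub>R g x)"
    using ig by (subst (asm) integrable_restrict_space) auto
  have Geq: "G x = indicator {a<..<b} x *\<^sub>R (indicator {0..1::real} x *\<^sub>R g x)" for x
    using a0 b1 by (auto simp: G_def indicator_def)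
  have iG: "integrable lebesgue G"
    unfolding Geq by (rule integrable_mult_indicator[OF _ ig2]) auto
  have Gm: "G \<in> borel_measurable lebesgue" using iG by (rule borel_measurable_integrable)
  have int0: "(LINT x|lebesgue. indicator {t<..} x * G x) = 0" for t
  proof -
    have "(\<lambda>x. indicator {t<..} x * G x) = (\<lambda>x. indicator {0..1::real} x *\<^sub>R (g x * indicator {max t a<..<b} x))"
      using a0 b1 by (auto simp: G_def indicator_def fun_eq_iff)
    then have "(LINT x|lebesgue. indicator {t<..} x * G x) = (LINT x|?M. g x * indicator {max t a<..<b} x)"
      by (simp add: integral_restrict_space)
    also have "\<dots> = 0"
      by (rule interval_integral_zero[OF wd a0 b1 fz]) auto
    finally show ?thesis .
  qed
  obtain G' where G'm: "G' \<in> borel_measurable lborel" and GG': "AE x in lborel. G x = G' x"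
    using completion_ex_borel_measurable_real[OF Gm] by blast
  have G'm2: "G' \<in> borel_measurable lebesgue" using G'm by (rule measurable_completion)
  have GG'2: "AE x in lebesgue. G x = G' x" using GG' by (rule AE_completion)
  have iG': "integrable lborel G'"
  proof -
    have "integrable lebesgue G'" using iG integrable_cong_AE[OF Gm G'm2 GG'2] by simp
    then show ?thesis using integrable_completion[OF G'm] by simp
  qed
  have int0': "(LINT x|lborel. indicator {t<..} x * G' x) = 0" for t
  proof -
    have m: "(\<lambda>x. indicator {t<..} x * G' x) \<in> borel_measurable lborel" using G'm by measurable
    have "(LINT x|lborel. indicator {t<..} x * G' x) = (LINT x|lebesgue. indicator {t<..} x * G' x)"
      by (rule integral_completion[OF m, symmetric])
    also have "\<dots> = (LINT x|lebesgue. indicator {t<..} x * G x)"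
    proof (rule integral_cong_AE)
      have ind: "(indicator {t<..} :: real \<Rightarrow> real) \<in> borel_measurable lebesgue"
        by (rule measurable_completion) simp
      show "(\<lambda>x. indicator {t<..} x * G' x) \<in> borel_measurable lebesgue"
        using ind G'm2 by (rule borel_measurable_times)
      show "(\<lambda>x. indicator {t<..} x * G x) \<in> borel_measurable lebesgue"
        using ind Gm by (rule borel_measurable_times)
      show "AE x in lebesgue. indicator {t<..} x * G' x = indicator {t<..} x * G x"
        using GG'2 by eventually_elim simp
    qed
    finally show ?thesis using int0 by simp
  qed
  define Gp where "Gp x = ennreal (G' x)" for x
  define Gn where "Gn x = ennreal (- G' x)" for x
  have Gpm: "Gp \<in> borel_measurable lborel" unfolding Gp_def using G'm by measurable
  have Gnm: "Gn \<in> borel_measurable lborel" unfolding Gn_def using G'm by measurable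
  have finp: "(\<integral>\<^sup>+ x. Gp x \<partial>lborel) < \<infinity>" using integrableD(2)[OF iG'] by (simp add: Gp_def top.not_eq_extremum)
  have finn: "(\<integral>\<^sup>+ x. Gn x \<partial>lborel) < \<infinity>" using integrableD(3)[OF iG'] by (simp add: Gn_def top.not_eq_extremum)
  have eqt: "emeasure (density lborel Gp) {t<..} = emeasure (density lborel Gn) {t<..}"
    and fint: "emeasure (density lborel Gp) {t<..} < \<infinity>" for t
  proof -
    have e1: "emeasure (density lborel Gp) {t<..} = (\<integral>\<^sup>+ x. Gp x * indicator {t<..} x \<partial>lborel)"
      by (rule emeasure_density[OF Gpm]) simp
    have e2: "emeasure (density lborel Gn) {t<..} = (\<integral>\<^sup>+ x. Gn x * indicator {t<..} x \<partial>lborel)"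
      by (rule emeasure_density[OF Gnm]) simp
    have f1: "(\<integral>\<^sup>+ x. Gp x * indicator {t<..} x \<partial>lborel) < \<infinity>"
      by (rule le_less_trans[OF nn_integral_mono finp]) (auto simp: indicator_def)
    have f2: "(\<integral>\<^sup>+ x. Gn x * indicator {t<..} x \<partial>lborel) < \<infinity>"
      by (rule le_less_trans[OF nn_integral_mono finn]) (auto simp: indicator_def)
    have it: "integrable lborel (\<lambda>x. indicator {t<..} x * G' x)"
      using integrable_mult_indicator[OF _ iG', of "{t<..}"] by simp
    have "0 = (LINT x|lborel. indicator {t<..} x * G' x)" using int0' by simp
    also have "\<dots> = enn2real (\<integral>\<^sup>+ x. ennreal (indicator {t<..} x * G' x) \<partial>lborel)
                   - enn2real (\<integral>\<^sup>+ x. ennreal (- (indicator {t<..} x * G' x)) \<partial>lborel)"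
      by (rule real_lebesgue_integral_def[OF it])
    also have "(\<lambda>x. ennreal (indicator {t<..} x * G' x)) = (\<lambda>x. Gp x * indicator {t<..} x)"
      by (auto simp: Gp_def indicator_def fun_eq_iff)
    also have "(\<lambda>x. ennreal (- (indicator {t<..} x * G' x))) = (\<lambda>x. Gn x * indicator {t<..} x)"
      by (auto simp: Gn_def indicator_def fun_eq_iff)
    finally have "enn2real (\<integral>\<^sup>+ x. Gp x * indicator {t<..} x \<partial>lborel) = enn2real (\<integral>\<^sup>+ x. Gn x * indicator {t<..} x \<partial>lborel)"
      by simp
    then have "(\<integral>\<^sup>+ x. Gp x * indicator {t<..} x \<partial>lborel) = (\<integral>\<^sup>+ x. Gn x * indicator {t<..} x \<partial>lborel)"
      using f1 f2 by (metis ennreal_enn2real infinity_ennreal_def)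
    then show "emeasure (density lborel Gp) {t<..} = emeasure (density lborel Gn) {t<..}"
      using e1 e2 by simp
    show "emeasure (density lborel Gp) {t<..} < \<infinity>" using e1 f1 by simp
  qed
  have "density lborel Gp = density lborel Gn"
    by (rule measure_eqI_lessThan) (use eqt fint in auto)
  then have "AE x in lborel. Gp x = Gn x"
    by (rule sigma_finite_measure.density_unique[OF sigma_finite_lborel Gpm Gnm])
  then have "AE x in lborel. G' x = 0"
  proof (rule AE_mp, intro AE_I2 impI)
    fix x assume "Gp x = Gn x"
    then show "G' x = 0" unfolding Gp_def Gn_def
      by (cases "G' x" "0::real" rule: linorder_cases) (auto simp: ennreal_neg)
  qed
  then have "AE x in lebesgue. G' x = 0" by (rule AE_completion)
  with GG'2 show ?thesis
    by eventually_elim (auto simp: G_def)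
qed



lemma smooth_deriv_cont:
  assumes "smooth_fun \<phi>"
  shows "continuous_on UNIV (deriv \<phi>)"
proof -
  obtain D where D: "D 0 = \<phi>" "\<And>k x. (D k has_real_derivative D (Suc k) x) (at x)"
    using assms unfolding smooth_fun_def by blast
  have "deriv \<phi> = D (Suc 0)"
  proof
    fix x show "deriv \<phi> x = D (Suc 0) x"
      using DERIV_imp_deriv[OF D(2)[of 0 x]] D(1) by simp
  qed
  moreover have "continuous_on UNIV (D (Suc 0))"
    using D(2) by (metis DERIV_isCont continuous_at_imp_continuous_on)
  ultimately show ?thesis by simp
qed

lemma integrable_mult_cont:
  fixes f h :: "real \<Rightarrow> real"
  assumes f: "integrable (lebesgue_on {0..1}) f" and h: "continuous_on UNIV h"
  shows "integrable (lebesgue_on {0..1}) (\<lambda>x. f x * h x)"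
proof -
  have "bounded (h ` {0..1})"
    by (intro compact_imp_bounded compact_continuous_image continuous_on_subset[OF h]) auto
  then obtain B where B: "\<And>x. x \<in> {0..1} \<Longrightarrow> \<bar>h x\<bar> \<le> B" unfolding bounded_real by blast
  have hm: "h \<in> borel_measurable (lebesgue_on {0..1})"
    by (rule continuous_imp_measurable_on_sets_lebesgue[OF continuous_on_subset[OF h]]) auto
  have fm: "f \<in> borel_measurable (lebesgue_on {0..1})" using f by (rule borel_measurable_integrable)
  show ?thesis
  proof (rule Bochner_Integration.integrable_bound[where f="\<lambda>x. B * f x"])
    show "integrable (lebesgue_on {0..1}) (\<lambda>x. B * f x)" using f by simp
    show "(\<lambda>x. f x * h x) \<in> borel_measurable (lebesgue_on {0..1})"
      using fm hm by (rule borel_measurable_times)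
    show "AE x in lebesgue_on {0..1}. norm (f x * h x) \<le> norm (B * f x)"
    proof (rule AE_I2)
      fix x assume "x \<in> space (lebesgue_on {0..1::real})"
      then have x: "x \<in> {0..1}" by simp
      have "\<bar>f x\<bar> * \<bar>h x\<bar> \<le> \<bar>f x\<bar> * B" using B[OF x] by (intro mult_left_mono) auto
      moreover have "0 \<le> B" using B[OF x] by linarith
      ultimately show "norm (f x * h x) \<le> norm (B * f x)" by (simp add: abs_mult mult.commute)
    qed
  qed
qed

lemma weak_deriv_add:
  assumes "weak_deriv_on 0 1 f1 g1" "weak_deriv_on 0 1 f2 g2"
  shows "weak_deriv_on 0 1 (\<lambda>x. f1 x + f2 x) (\<lambda>x. g1 x + g2 x)"
  unfolding weak_deriv_on_def
proof (intro conjI allI impI)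
  show "integrable (lebesgue_on {0..1}) (\<lambda>x. f1 x + f2 x)"
    using assms by (simp add: weak_deriv_on_def)
  show "integrable (lebesgue_on {0..1}) (\<lambda>x. g1 x + g2 x)"
    using assms by (simp add: weak_deriv_on_def)
  fix \<phi> assume t: "test_fun 0 1 \<phi>"
  then have s: "smooth_fun \<phi>" by (simp add: test_fun_def)
  have i1: "integrable (lebesgue_on {0..1}) (\<lambda>x. f1 x * deriv \<phi> x)"
    using assms(1) by (intro integrable_mult_cont smooth_deriv_cont s) (simp add: weak_deriv_on_def)
  have i2: "integrable (lebesgue_on {0..1}) (\<lambda>x. f2 x * deriv \<phi> x)"
    using assms(2) by (intro integrable_mult_cont smooth_deriv_cont s) (simp add: weak_deriv_on_def)
  have j1: "integrable (lebesgue_on {0..1}) (\<lambda>x. g1 x * \<phi> x)"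
    using assms(1) by (intro integrable_mult_cont smooth_continuous s) (simp add: weak_deriv_on_def)
  have j2: "integrable (lebesgue_on {0..1}) (\<lambda>x. g2 x * \<phi> x)"
    using assms(2) by (intro integrable_mult_cont smooth_continuous s) (simp add: weak_deriv_on_def)
  have "(LINT x|lebesgue_on {0..1}. (f1 x + f2 x) * deriv \<phi> x)
      = (LINT x|lebesgue_on {0..1}. f1 x * deriv \<phi> x + f2 x * deriv \<phi> x)"
    by (simp add: distrib_right)
  also have "\<dots> = (LINT x|lebesgue_on {0..1}. f1 x * deriv \<phi> x) + (LINT x|lebesgue_on {0..1}. f2 x * deriv \<phi> x)"
    by (rule Bochner_Integration.integral_add[OF i1 i2])
  also have "\<dots> = - (LINT x|lebesgue_on {0..1}. g1 x * \<phi> x) - (LINT x|lebesgue_on {0..1}. g2 x * \<phi> x)"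
    using assms t by (simp add: weak_deriv_on_def)
  also have "\<dots> = - ((LINT x|lebesgue_on {0..1}. g1 x * \<phi> x + g2 x * \<phi> x))"
    by (simp add: Bochner_Integration.integral_add[OF j1 j2])
  also have "\<dots> = - (LINT x|lebesgue_on {0..1}. (g1 x + g2 x) * \<phi> x)"
    by (simp add: distrib_right)
  finally show "(LINT x|lebesgue_on {0..1}. (f1 x + f2 x) * deriv \<phi> x) = - (LINT x|lebesgue_on {0..1}. (g1 x + g2 x) * \<phi> x)" .
qed

lemma weak_deriv_cmult:
  assumes "weak_deriv_on 0 1 f g"
  shows "weak_deriv_on 0 1 (\<lambda>x. c * f x) (\<lambda>x. c * g x)"
  using assms unfolding weak_deriv_on_def
  by (auto simp: mult.assoc)

lemma weak_deriv_zero: "weak_deriv_on 0 1 (\<lambda>x. 0) (\<lambda>x. 0)"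
  unfolding weak_deriv_on_def by simp

lemma weak_deriv_sum:
  assumes "finite S" "\<And>j. j \<in> S \<Longrightarrow> weak_deriv_on 0 1 (f j) (g j)"
  shows "weak_deriv_on 0 1 (\<lambda>x. \<Sum>j\<in>S. c j * f j x) (\<lambda>x. \<Sum>j\<in>S. c j * g j x)"
  using assms
proof (induction S rule: finite_induct)
  case empty then show ?case by (simp add: weak_deriv_zero)
next
  case (insert j S)
  then show ?case
    by (simp add: weak_deriv_add weak_deriv_cmult)
qed



lemma matrix_eqI: "(\<And>x. (M::real^'n^'m) *v x = N *v x) \<Longrightarrow> M = N"
  using matrix_eq by blast

lemma matrix_add_rdistrib': "((A::real^'n^'m) + B) ** (C::real^'p^'n) = A ** C + B ** C"
  by (simp add: matrix_matrix_mult_def vec_eq_iff sum.distrib distrib_right)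

lemma matrix_diff_rdistrib': "((A::real^'n^'m) - B) ** (C::real^'p^'n) = A ** C - B ** C"
  by (simp add: matrix_matrix_mult_def vec_eq_iff sum_subtractf left_diff_distrib)

lemma matrix_diff_ldistrib': "(C::real^'n^'m) ** ((A::real^'p^'n) - B) = C ** A - C ** B"
  by (simp add: matrix_matrix_mult_def vec_eq_iff sum_subtractf right_diff_distrib)

lemma pinv_unique:
  fixes A X Y :: "real^'n^'n"
  assumes X: "A ** X ** A = A" "X ** A ** X = X" "transpose (A ** X) = A ** X" "transpose (X ** A) = X ** A"
    and Y: "A ** Y ** A = A" "Y ** A ** Y = Y" "transpose (A ** Y) = A ** Y" "transpose (Y ** A) = Y ** A"
  shows "X = Y"
proof -
  have tA: "transpose A = transpose A ** transpose Y ** transpose A"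
    using arg_cong[OF Y(1), of transpose] by (simp add: matrix_transpose_mul matrix_mul_assoc)
  have "X = X ** (A ** X)" using X(2) by (simp add: matrix_mul_assoc)
  also have "\<dots> = X ** transpose (A ** X)" using X(3) by simp
  also have "\<dots> = X ** transpose X ** transpose A" by (simp add: matrix_transpose_mul matrix_mul_assoc)
  also have "\<dots> = X ** transpose X ** (transpose A ** transpose Y ** transpose A)" using tA by simp
  also have "\<dots> = X ** (transpose (A ** X)) ** (transpose (A ** Y))"
    by (simp add: matrix_transpose_mul matrix_mul_assoc)
  also have "\<dots> = X ** (A ** X) ** (A ** Y)" using X(3) Y(3) by simp
  also have "\<dots> = (X ** A ** X) ** A ** Y" by (simp add: matrix_mul_assoc)
  also have "\<dots> = X ** A ** Y" using X(2) by simp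
  finally have 1: "X = X ** A ** Y" .
  have tA2: "transpose A = transpose A ** transpose X ** transpose A"
    using arg_cong[OF X(1), of transpose] by (simp add: matrix_transpose_mul matrix_mul_assoc)
  have "Y = (Y ** A) ** Y" using Y(2) by (simp add: matrix_mul_assoc)
  also have "\<dots> = transpose (Y ** A) ** Y" using Y(4) by simp
  also have "\<dots> = transpose A ** transpose Y ** Y" by (simp add: matrix_transpose_mul matrix_mul_assoc)
  also have "\<dots> = (transpose A ** transpose X ** transpose A) ** transpose Y ** Y" using tA2 by simp
  also have "\<dots> = transpose (X ** A) ** transpose (Y ** A) ** Y"
    by (simp add: matrix_transpose_mul matrix_mul_assoc)
  also have "\<dots> = (X ** A) ** (Y ** A) ** Y" using X(4) Y(4) by simp
  also have "\<dots> = X ** A ** (Y ** A ** Y)" by (simp add: matrix_mul_assoc)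
  also have "\<dots> = X ** A ** Y" using Y(2) by simp
  finally have 2: "Y = X ** A ** Y" .
  from 1 2 show ?thesis by simp
qed

lemma pinv_exists:
  fixes A :: "real^'n^'n"
  assumes sym: "transpose A = A"
  shows "\<exists>X. A ** X ** A = A \<and> X ** A ** X = X \<and> transpose (A ** X) = A ** X \<and> transpose (X ** A) = X ** A"
proof -
  define W where "W = {v. A *v v = 0}"
  have sW: "subspace W" unfolding W_def subspace_def by (simp add: matrix_vector_right_distrib matrix_vector_mult_scaleR)
  obtain B where BW: "B \<subseteq> W" and Borth: "pairwise orthogonal B" and B1: "\<And>x. x \<in> B \<Longrightarrow> norm x = 1"
    and Bind: "independent B" and Bfin: "finite B" and Bspan: "span B = W"
    by (metis orthonormal_basis_subspace[OF sW] independent_imp_finite)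
  define P :: "real^'n^'n" where "P = (\<chi> i j. \<Sum>b\<in>B. b $ i * b $ j)"
  have Pv: "P *v x = (\<Sum>b\<in>B. (b \<bullet> x) *\<^sub>R b)" for x
    by (simp add: vec_eq_iff P_def matrix_vector_mult_def inner_vec_def sum_component
        sum_distrib_left sum_distrib_right algebra_simps) (subst sum.swap, simp add: algebra_simps)
  have tP: "transpose P = P" by (simp add: P_def transpose_def vec_eq_iff mult.commute)
  have binner: "b \<bullet> (P *v x) = b \<bullet> x" if b: "b \<in> B" for b x
  proof -
    have "b \<bullet> (P *v x) = (\<Sum>c\<in>B. (c \<bullet> x) * (b \<bullet> c))" by (simp add: Pv inner_sum_right)
    also have "\<dots> = (b \<bullet> x) * (b \<bullet> b) + (\<Sum>c\<in>B - {b}. (c \<bullet> x) * (b \<bullet> c))"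
      using b Bfin by (simp add: sum.remove)
    also have "(\<Sum>c\<in>B - {b}. (c \<bullet> x) * (b \<bullet> c)) = 0"
      using Borth b by (intro sum.neutral) (auto simp: pairwise_def orthogonal_def)
    also have "b \<bullet> b = 1" using B1[OF b] by (simp add: dot_square_norm)
    finally show ?thesis by simp
  qed
  have PW: "P *v x \<in> W" for x
  proof -
    have "P *v x \<in> span B" unfolding Pv by (intro span_sum span_mul span_base) 
    then show ?thesis using Bspan by simp
  qed
  have Pid: "P *v w = w" if w: "w \<in> W" for w
  proof -
    define d where "d = w - P *v w"
    have "d \<in> W" unfolding d_def using w PW sW by (simp add: subspace_diff)
    then have dspan: "d \<in> span B" using Bspan by simp
    have "orthogonal d d"
    proof (rule orthogonal_to_span[OF dspan])
      fix y assume "y \<in> B"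
      then have "y \<bullet> (P *v w) = y \<bullet> w" by (rule binner)
      then show "orthogonal d y"
        by (simp add: orthogonal_def d_def inner_diff_left inner_commute[of "P *v w" y] inner_commute[of w y])
    qed
    then have "d = 0" by (simp add: orthogonal_def)
    then show ?thesis by (simp add: d_def)
  qed
  have AP: "A ** P = 0"
    by (rule matrix_eqI) (use PW in \<open>simp add: matrix_vector_mul_assoc[symmetric] W_def\<close>)
  have PA: "P ** A = 0"
  proof -
    have "transpose (P ** A) = 0" by (simp add: matrix_transpose_mul tP sym AP)
    then have "transpose (transpose (P ** A)) = transpose 0" by simp
    then show ?thesis by (simp add: transpose_def vec_eq_iff)
  qed
  have PP: "P ** P = P"
    by (rule matrix_eqI) (use PW Pid in \<open>simp add: matrix_vector_mul_assoc[symmetric]\<close>)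
  define M where "M = A + P"
  have injM: "inj ((*v) M)"
  proof (rule injI)
    fix x y assume "M *v x = M *v y"
    then have e: "M *v (x - y) = 0" by (simp add: matrix_vector_mult_diff_distrib)
    define v where "v = x - y"
    have "A *v v + P *v v = 0" using e by (simp add: M_def v_def matrix_vector_mult_add_rdistrib)
    then have "P *v (A *v v + P *v v) = 0" by simp
    then have "(P ** A) *v v + (P ** P) *v v = 0"
      by (simp add: matrix_vector_right_distrib matrix_vector_mul_assoc)
    then have Pv0: "P *v v = 0" using PA PP by simp
    with \<open>A *v v + P *v v = 0\<close> have "v \<in> W" by (simp add: W_def)
    then have "v = 0" using Pid Pv0 by metis
    then show "x = y" by (simp add: v_def)
  qed
  then obtain N where NM: "N ** M = mat 1" using matrix_left_invertible_injective by blast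
  then have MN: "M ** N = mat 1" using matrix_left_right_inverse by blast
  have PM: "P ** M = P" by (simp add: M_def matrix_add_ldistrib PA PP)
  have MP: "M ** P = P" by (simp add: M_def matrix_add_rdistrib' AP PP)
  have PN: "P ** N = P" using arg_cong[OF PM, of "\<lambda>Z. Z ** N"] by (simp add: matrix_mul_assoc[symmetric] MN)
  have NP: "N ** P = P" using arg_cong[OF MP, of "\<lambda>Z. N ** Z"] by (simp add: matrix_mul_assoc NM)
  have AM: "A = M - P" by (simp add: M_def)
  define X where "X = N - P"
  have AX: "A ** X = mat 1 - P"
    unfolding AM X_def by (simp add: matrix_diff_ldistrib' matrix_diff_rdistrib' MN MP PN PP)
  have XA: "X ** A = mat 1 - P"
    unfolding AM X_def by (simp add: matrix_diff_ldistrib' matrix_diff_rdistrib' NM NP PM PP)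
  have tI: "transpose (mat 1 - P) = mat 1 - P" by (simp add: transpose_def vec_eq_iff P_def mat_def mult.commute)
  have 1: "A ** X ** A = A"
    unfolding AX by (simp add: matrix_diff_rdistrib' PA)
  have 2: "X ** A ** X = X"
    unfolding XA by (simp add: X_def matrix_diff_ldistrib' matrix_diff_rdistrib' PN PP)
  show ?thesis by (intro exI[of _ X] conjI 1 2) (simp_all only: AX XA tI)
qed

lemma pinv_AXA:
  fixes A :: "real^'n^'n"
  assumes "transpose A = A"
  shows "A ** pinv A ** A = A"
proof -
  obtain X where X: "A ** X ** A = A \<and> X ** A ** X = X \<and> transpose (A ** X) = A ** X \<and> transpose (X ** A) = X ** A"
    using pinv_exists[OF assms] by blast
  have "A ** pinv A ** A = A \<and> pinv A ** A ** pinv A = pinv A \<and>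
        transpose (A ** pinv A) = A ** pinv A \<and> transpose (pinv A ** A) = pinv A ** A"
    unfolding pinv_def
    by (rule theI[of _ X]) (use X pinv_unique in blast)+
  then show ?thesis by blast
qed



lemma kernel_AE:
  fixes A A' :: "real \<Rightarrow> real^'n^'n"
  assumes H1: "\<forall>i j. H1_with_deriv (\<lambda>s. A s $ i $ j) (\<lambda>s. A' s $ i $ j)"
    and mono: "\<forall>s\<in>{0..1}. \<forall>s'\<in>{0..1}. \<forall>x. s \<ge> s' \<longrightarrow> norm (A s *v x) \<le> norm (A s' *v x)"
  shows "AE s in lebesgue. s \<in> {0..1} \<longrightarrow> (\<forall>v. A s *v v = 0 \<longrightarrow> A' s *v v = 0)"
proof -
  define K where "K s = {v. A s *v v = 0}" for s
  have Ksub: "subspace (K s)" for s unfolding K_def subspace_def by (simp add: matrix_vector_right_distrib matrix_vector_mult_scaleR)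
  have Kmono: "K s' \<subseteq> K s" if "s' \<le> s" "s \<in> {0..1}" "s' \<in> {0..1}" for s s'
  proof
    fix v assume "v \<in> K s'"
    then have "A s' *v v = 0" by (simp add: K_def)
    moreover have "norm (A s *v v) \<le> norm (A s' *v v)" using mono that by blast
    ultimately have "norm (A s *v v) \<le> 0" by simp
    then show "v \<in> K s" by (simp add: K_def)
  qed
  have wd: "weak_deriv_on 0 1 (\<lambda>s. A s $ i $ j) (\<lambda>s. A' s $ i $ j)" for i j
    using H1 by (simp add: H1_with_deriv_def)
  have wdv: "weak_deriv_on 0 1 (\<lambda>s. (A s *v v) $ i) (\<lambda>s. (A' s *v v) $ i)" for v i
  proof -
    have "weak_deriv_on 0 1 (\<lambda>s. \<Sum>j\<in>UNIV. v $ j * A s $ i $ j) (\<lambda>s. \<Sum>j\<in>UNIV. v $ j * A' s $ i $ j)"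
      by (rule weak_deriv_sum) (auto intro: wd)
    then show ?thesis by (simp add: matrix_vector_mult_def mult.commute)
  qed
  have finK: "finite (K ` {0..1})"
  proof -
    have "inj_on dim (K ` {0..1})"
    proof (rule inj_onI)
      fix W1 W2 assume "W1 \<in> K ` {0..1}" "W2 \<in> K ` {0..1}" and d: "dim W1 = dim W2"
      then obtain s1 s2 where s: "s1 \<in> {0..1}" "s2 \<in> {0..1}" "W1 = K s1" "W2 = K s2" by blast
      show "W1 = W2"
      proof (cases "s1 \<le> s2")
        case True
        have "K s1 \<subseteq> K s2" using True s by (intro Kmono) auto
        from subspace_dim_equal[OF Ksub Ksub this] show ?thesis using s d by simp
      next
        case False
        have "K s2 \<subseteq> K s1" using False s by (intro Kmono) auto
        from subspace_dim_equal[OF Ksub Ksub this] show ?thesis using s d by simp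
      qed
    qed
    moreover have "dim ` (K ` {0..1}) \<subseteq> {..CARD('n)}" using dim_subset_UNIV_cart by auto
    ultimately show ?thesis using finite_imageD finite_subset[OF _ finite_atMost] by blast
  qed
  have perW: "AE s in lebesgue. s \<in> {0..1} \<and> K s = W \<longrightarrow> (\<forall>v\<in>W. A' s *v v = 0)" if W: "W \<in> K ` {0..1}" for W
  proof -
    define T where "T = {s \<in> {0..1}. K s = W}"
    have Tne: "T \<noteq> {}" using W by (auto simp: T_def)
    have Tbb: "bdd_below T" "bdd_above T" unfolding T_def by (auto intro: bdd_belowI[of _ 0] bdd_aboveI[of _ 1])
    define lo where "lo = Inf T"
    define hi where "hi = Sup T"
    have lo0: "0 \<le> lo" unfolding lo_def by (rule cInf_greatest[OF Tne]) (auto simp: T_def)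
    have hi1: "hi \<le> 1" unfolding hi_def by (rule cSup_least[OF Tne]) (auto simp: T_def)
    have inT: "lo \<le> s \<and> s \<le> hi" if "s \<in> T" for s
      using that Tbb unfolding lo_def hi_def by (auto intro: cInf_lower cSup_upper)
    have mid: "K s = W" if "lo < s" "s < hi" for s
    proof -
      have "\<exists>x\<in>T. x < s" using cInf_less_iff[OF Tne Tbb(1), of s] that(1) by (simp add: lo_def)
      then obtain s1 where s1: "s1 \<in> T" "s1 < s" by blast
      have "\<exists>x\<in>T. s < x" using less_cSup_iff[OF Tne Tbb(2), of s] that(2) by (simp add: hi_def)
      then obtain s2 where s2: "s2 \<in> T" "s < s2" by blast
      have s01: "s \<in> {0..1}" using s1 s2 by (auto simp: T_def)
      have T1: "s1 \<in> {0..1}" "K s1 = W" using s1 by (auto simp: T_def)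
      have T2: "s2 \<in> {0..1}" "K s2 = W" using s2 by (auto simp: T_def)
      have "K s1 \<subseteq> K s" using s1(2) s01 T1(1) by (intro Kmono) auto
      moreover have "K s \<subseteq> K s2" using s2(2) s01 T2(1) by (intro Kmono) auto
      ultimately show ?thesis using T1(2) T2(2) by blast
    qed
    have sW: "subspace W" using W Ksub by blast
    obtain B where BW: "B \<subseteq> W" and Borth: "pairwise orthogonal B" and B1: "\<And>x. x \<in> B \<Longrightarrow> norm x = 1"
      and Bind: "independent B" and Bfin: "finite B" and Bspan: "span B = W"
      by (metis orthonormal_basis_subspace[OF sW] independent_imp_finite)
    have WB: "W \<subseteq> span B" using Bspan by simp
    have aeb: "AE s in lebesgue. lo < s \<and> s < hi \<longrightarrow> (A' s *v b) $ i = 0" if b: "b \<in> B" for b i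
    proof (rule weak_deriv_zero_interval[OF wdv lo0 hi1])
      fix x assume "lo < x" "x < hi"
      then have "K x = W" by (rule mid)
      then show "(A x *v b) $ i = 0" using b BW by (auto simp: K_def)
    qed
    have ae1: "AE s in lebesgue. lo < s \<and> s < hi \<longrightarrow> (\<forall>b\<in>B. A' s *v b = 0)"
    proof -
      have "AE s in lebesgue. \<forall>b\<in>B. \<forall>i\<in>UNIV. lo < s \<and> s < hi \<longrightarrow> (A' s *v b) $ i = 0"
        by (intro AE_finite_allI Bfin finite_UNIV) (use aeb in auto)
      then show ?thesis by eventually_elim (auto simp: vec_eq_iff)
    qed
    have ae2: "AE s in lebesgue. s \<noteq> lo \<and> s \<noteq> hi"
    proof (rule AE_I'[of "{lo, hi}"])
      show "{lo, hi} \<in> null_sets lebesgue"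
        by (rule negligible_iff_null_sets[THEN iffD1, OF negligible_finite]) simp
    qed auto
    show ?thesis
      using ae1 ae2
    proof eventually_elim
      case (elim s)
      show ?case
      proof (intro impI ballI)
        fix v assume sW: "s \<in> {0..1} \<and> K s = W" and v: "v \<in> W"
        then have "s \<in> T" by (simp add: T_def)
        with inT elim have "lo < s" "s < hi" by force+
        with elim have Bz: "\<forall>b\<in>B. A' s *v b = 0" by blast
        have "subspace {u. A' s *v u = 0}"
          unfolding subspace_def by (simp add: matrix_vector_right_distrib matrix_vector_mult_scaleR)
        then have "span B \<subseteq> {u. A' s *v u = 0}" using Bz by (intro span_minimal) auto
        then show "A' s *v v = 0" using v WB by auto
      qed
    qed
  qed
  have "AE s in lebesgue. \<forall>W\<in>K ` {0..1}. s \<in> {0..1} \<and> K s = W \<longrightarrow> (\<forall>v\<in>W. A' s *v v = 0)"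
    by (rule AE_finite_allI[OF finK]) (rule perW)
  then show ?thesis
    by eventually_elim (auto simp: K_def)
qed

theorem propositionA4:
  fixes A A' :: "real \<Rightarrow> real^'n^'n"
  assumes H1: "\<forall>i j. H1_with_deriv (\<lambda>s. A s $ i $ j) (\<lambda>s. A' s $ i $ j)"
    and A0: "A 0 = mat 1" and A1: "A 1 = 0"
    and psd: "\<forall>s\<in>{0..1}. psd (A s)"
    and mono: "\<forall>s\<in>{0..1}. \<forall>s'\<in>{0..1}. \<forall>x. s \<ge> s' \<longrightarrow> norm (A s *v x) \<le> norm (A s' *v x)"
    and cont: "continuous_on {0..1} A"
  shows "(\<forall>x0 \<epsilon> :: real^'n. AE s in lebesgue_on {0..1}.
            A' s *v (pinv (A s) *v ((A s *v x0 + (mat 1 - A s) *v \<epsilon>) - \<epsilon>))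
              = A' s *v (x0 - \<epsilon>))
       \<and> (AE s in lebesgue_on {0..1}. A' s ** pinv (A s) ** A s = A' s)"
proof -
  have key: "AE s in lebesgue. s \<in> {0..1} \<longrightarrow> (\<forall>w. A' s *v (pinv (A s) *v (A s *v w)) = A' s *v w)"
    using kernel_AE[OF H1 mono]
  proof eventually_elim
    case (elim s)
    show ?case
    proof (intro impI allI)
      fix w assume s: "s \<in> {0..1}"
      have sym: "transpose (A s) = A s" using psd s by (simp add: psd_def)
      have AXA: "A s ** pinv (A s) ** A s = A s" by (rule pinv_AXA[OF sym])
      define u where "u = w - pinv (A s) *v (A s *v w)"
      have "A s *v u = A s *v w - (A s ** pinv (A s) ** A s) *v w"
        by (simp add: u_def matrix_vector_mult_diff_distrib matrix_vector_mul_assoc matrix_mul_assoc)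
      then have "A s *v u = 0" using AXA by simp
      then have "A' s *v u = 0" using elim s by blast
      then show "A' s *v (pinv (A s) *v (A s *v w)) = A' s *v w"
        by (simp add: u_def matrix_vector_mult_diff_distrib)
    qed
  qed
  have key2: "AE s in lebesgue_on {0..1}. (\<forall>w. A' s *v (pinv (A s) *v (A s *v w)) = A' s *v w)"
    using key by (subst AE_restrict_space_iff) auto
  have c1: "AE s in lebesgue_on {0..1}.
            A' s *v (pinv (A s) *v ((A s *v x0 + (mat 1 - A s) *v \<epsilon>) - \<epsilon>))
              = A' s *v (x0 - \<epsilon>)" for x0 \<epsilon> :: "real^'n"
    using key2
  proof eventually_elim
    case (elim s)
    have "(A s *v x0 + (mat 1 - A s) *v \<epsilon>) - \<epsilon> = A s *v (x0 - \<epsilon>)"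
      by (simp add: matrix_vector_mult_diff_rdistrib matrix_vector_mult_diff_distrib)
    then show ?case using elim by simp
  qed
  have c2: "AE s in lebesgue_on {0..1}. A' s ** pinv (A s) ** A s = A' s"
    using key2
  proof eventually_elim
    case (elim s)
    show ?case
      by (rule matrix_eqI) (use elim in \<open>simp add: matrix_vector_mul_assoc[symmetric]\<close>)
  qed
  show ?thesis using c1 c2 by blast
qed

end
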